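(* Let $A \subseteq \mathbb{C}$ be a countable set, and for each $\alpha \in A$ and each integer $s \geq 0$ let $E_{\alpha,s} \subseteq \mathbb{C}$ be a dense subset of $\mathbb{C}$. Then there exists a transcendental entire function $f:\mathbb{C}\to\mathbb{C}$ such that $f^{(s)}(\alpha) \in E_{\alpha,s}$ for all $\alpha \in A$ and all integers $s \geq 0$.
   Context: A transcendental entire function is an entire function $\mathbb{C}\to\mathbb{C}$ that is not a polynomial. $f^{(s)}$ denotes the $s$-th derivative of $f$, with $f^{(0)}=f$. *)

theory Defs
  imports "HOL-Analysis.Analysis" "HOL-Computational_Algebra.Polynomial"
begin

definition transcendental_entire :: "(complex \<Rightarrow> complex) \<Rightarrow> bool" where
  "transcendental_entire f \<longleftrightarrow> f holomorphic_on UNIV \<and> \<not> (\<exists>p :: complex poly. \<forall>z. f z = poly p z)"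

end

theory Submission
  imports Defs
begin


lemma L1: "[:-a,1:]^k dvd p \<Longrightarrow> s < k \<Longrightarrow> poly ((pderiv^^s) p) (a::complex) = 0"
proof (induction s arbitrary: p k)
  case 0
  then obtain k' where "k = Suc k'" by (cases k) auto
  then have "[:-a,1:] dvd p" using 0 by (meson dvd_power dvd_trans zero_less_Suc)
  then show ?case by (simp add: poly_eq_0_iff_dvd)
next
  case (Suc s)
  then obtain k' where k: "k = Suc k'" by (cases k) auto
  from Suc.prems obtain q where p: "p = [:-a,1:]^k * q" by (auto elim: dvdE)
  have "pderiv p = [:-a,1:]^k' * ([:-a,1:] * pderiv q + q * smult (of_nat (Suc k')) (pderiv [:-a,1:]))"
    unfolding p k pderiv_mult pderiv_power_Suc by (simp add: algebra_simps)
  then have "[:-a,1:]^k' dvd pderiv p" by simp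
  then have "poly ((pderiv^^s) (pderiv p)) a = 0" using Suc.IH[of k' "pderiv p"] Suc.prems k by simp
  then show ?case by (simp add: funpow_Suc_right del: funpow.simps)
qed

lemma L2: "poly ((pderiv^^s) ([:-a,1:]^s * r)) (a::complex) = fact s * poly r a"
proof (induction s arbitrary: r)
  case 0 then show ?case by simp
next
  case (Suc s)
  have "pderiv ([:-a,1:]^Suc s * r) = [:-a,1:]^s * (smult (of_nat (Suc s)) r + [:-a,1:] * pderiv r)"
    unfolding pderiv_mult pderiv_power_Suc by (simp add: pderiv_pCons algebra_simps)
  then have "poly ((pderiv^^Suc s) ([:-a,1:]^Suc s * r)) a
     = fact s * poly (smult (of_nat (Suc s)) r + [:-a,1:] * pderiv r) a"
    using Suc.IH by (simp add: funpow_Suc_right del: funpow.simps)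
  also have "\<dots> = fact (Suc s) * poly r a" by (simp add: algebra_simps)
  finally show ?case .
qed

lemma deriv_poly_pow: "(deriv^^s) (poly p) = poly ((pderiv^^s) (p::complex poly))"
proof (induction s)
  case (Suc s)
  have "deriv (poly q) = poly (pderiv q)" for q :: "complex poly"
    by (rule ext, rule DERIV_imp_deriv, rule poly_DERIV)
  then show ?case using Suc by simp
qed simp

lemma degree_pderiv_pow: "degree ((pderiv^^s) (p::complex poly)) = degree p - s"
  by (induction s) (auto simp: degree_pderiv)

lemma not_poly:
  assumes "\<And>s. (deriv^^s) f (a::complex) \<noteq> 0"
  shows "\<not> (\<exists>p :: complex poly. \<forall>z. f z = poly p z)"
proof
  assume "\<exists>p :: complex poly. \<forall>z. f z = poly p z"
  then obtain p :: "complex poly" where "f = poly p" by auto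
  moreover have "(pderiv^^(Suc (degree p))) p = 0"
    using degree_pderiv_pow[of "degree p" p] by (simp add: pderiv_eq_0_iff)
  ultimately show False using assms[of "Suc (degree p)"] deriv_poly_pow[of "Suc (degree p)" p] by simp
qed

definition pb :: "complex poly \<Rightarrow> real \<Rightarrow> real" where
  "pb p R = (\<Sum>i\<le>degree p. norm (coeff p i) * R^i)"

lemma pb_bound: "norm x \<le> R \<Longrightarrow> norm (poly p x) \<le> pb p R"
  unfolding pb_def poly_altdef
  apply (rule order_trans[OF norm_sum])
  apply (rule sum_mono)
  apply (simp add: norm_mult norm_power)
  by (simp add: mult_left_mono power_mono)

lemma pb_nonneg: "R \<ge> 0 \<Longrightarrow> pb p R \<ge> 0"
  unfolding pb_def by (intro sum_nonneg) simp

lemma dense_pick: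
  assumes "closure (E::complex set) = UNIV" "d \<noteq> 0" "e > 0"
  shows "\<exists>c. norm c \<le> e \<and> v + c * d \<in> E - {0}"
proof -
  define r where "r = e * norm d"
  have r: "r > 0" using assms by (simp add: r_def)
  define x where "x = (if v = 0 then v + of_real (r/4) else v)"
  have x0: "x \<noteq> 0" using r by (auto simp: x_def)
  have xv: "dist x v < r/2" using r by (auto simp: x_def dist_norm)
  have "x \<in> closure E" using assms by simp
  then obtain w where w: "w \<in> E" "dist w x < min (r/2) (norm x)"
    using r x0 by (metis closure_approachable min_less_iff_conj zero_less_divide_iff zero_less_norm_iff zero_less_numeral)
  have "w \<noteq> 0" using w(2) by (auto simp: dist_norm)
  have wv: "norm (w - v) < r" using w(2) xv dist_triangle_less_add[of w x "r/2" v "r/2"] by (auto simp: dist_norm norm_minus_commute)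
  show ?thesis
  proof (intro exI conjI)
    show "norm ((w - v)/d) \<le> e" using wv assms(2) by (simp add: norm_divide r_def divide_le_eq)
    show "v + (w - v) / d * d \<in> E - {0}" using assms(2) \<open>w \<noteq> 0\<close> w(1) by simp
  qed
qed



definition h :: "(nat \<Rightarrow> complex) \<Rightarrow> complex \<Rightarrow> nat \<Rightarrow> nat" where
  "h \<beta> a k = card {m. m < k \<and> \<beta> m = a}"

lemma h_Suc: "h \<beta> a (Suc k) = h \<beta> a k + (if \<beta> k = a then 1 else 0)"
proof -
  have "{m. m < Suc k \<and> \<beta> m = a} = {m. m < k \<and> \<beta> m = a} \<union> (if \<beta> k = a then {k} else {})"
    by (auto simp: less_Suc_eq)
  then show ?thesis unfolding h_def by (auto simp: card_insert_if)
qed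

lemma h_mono: "j \<le> k \<Longrightarrow> h \<beta> a j \<le> h \<beta> a k"
  unfolding h_def by (intro card_mono) auto

lemma h_0: "h \<beta> a 0 = 0" by (simp add: h_def)

lemma h_unbounded:
  assumes "infinite {n. \<beta> n = a}"
  shows "\<exists>k. h \<beta> a k \<ge> K"
proof (induction K)
  case (Suc K)
  then obtain k where k: "h \<beta> a k \<ge> K" by auto
  obtain m where m: "m \<ge> k" "\<beta> m = a" using assms unfolding infinite_nat_iff_unbounded_le by auto
  have "h \<beta> a (Suc m) \<ge> Suc K" using h_Suc[of \<beta> a m] h_mono[OF m(1), of \<beta> a] k m(2) by simp
  then show ?case by blast
qed simp

lemma hit:
  assumes "infinite {n. \<beta> n = a}"
  shows "\<exists>n. \<beta> n = a \<and> h \<beta> a n = s"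
proof -
  have "\<exists>k. h \<beta> a k \<ge> Suc s" by (rule h_unbounded[OF assms])
  then obtain k where k: "h \<beta> a k > s" by (auto simp: Suc_le_eq)
  define N where "N = (LEAST k. h \<beta> a k > s)"
  have N: "h \<beta> a N > s" unfolding N_def using k by (rule LeastI)
  have "N \<noteq> 0" using N by (cases N) (auto simp: h_0)
  then obtain j where j: "N = Suc j" by (cases N) auto
  have "\<not> h \<beta> a j > s" using j not_less_Least[of j "\<lambda>k. h \<beta> a k > s"] N_def by auto
  then show ?thesis using N j h_Suc[of \<beta> a j] by (auto split: if_splits)
qed

definition X :: "complex \<Rightarrow> complex poly" where "X a = [:-a, 1:]"

definition Q :: "(nat \<Rightarrow> complex) \<Rightarrow> nat \<Rightarrow> complex poly" where
  "Q \<beta> n = (\<Prod>m<n. X (\<beta> m))"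

lemma Q_split: "Q \<beta> n = X a ^ h \<beta> a n * (\<Prod>m\<in>{m. m<n \<and> \<beta> m \<noteq> a}. X (\<beta> m))"
proof -
  have "Q \<beta> n = prod (\<lambda>m. X (\<beta> m)) ({m. m<n \<and> \<beta> m = a} \<union> {m. m<n \<and> \<beta> m \<noteq> a})"
    unfolding Q_def by (rule prod.cong) auto
  also have "\<dots> = (\<Prod>m\<in>{m. m<n \<and> \<beta> m = a}. X (\<beta> m)) * (\<Prod>m\<in>{m. m<n \<and> \<beta> m \<noteq> a}. X (\<beta> m))"
    by (rule prod.union_disjoint) auto
  also have "(\<Prod>m\<in>{m. m<n \<and> \<beta> m = a}. X (\<beta> m)) = (\<Prod>m\<in>{m. m<n \<and> \<beta> m = a}. X a)"
    by (rule prod.cong) auto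
  also have "\<dots> = X a ^ h \<beta> a n" unfolding h_def by simp
  finally show ?thesis .
qed

definition cnt :: "(nat \<Rightarrow> complex) \<Rightarrow> nat \<Rightarrow> nat" where "cnt \<beta> n = h \<beta> (\<beta> n) n"

definition D :: "(nat \<Rightarrow> complex) \<Rightarrow> nat \<Rightarrow> nat \<Rightarrow> complex" where
  "D \<beta> m n = poly ((pderiv^^(cnt \<beta> n)) (Q \<beta> m)) (\<beta> n)"

lemma D_later: "n < m \<Longrightarrow> D \<beta> m n = 0"
proof -
  assume nm: "n < m"
  let ?a = "\<beta> n"
  have "h \<beta> ?a (Suc n) \<le> h \<beta> ?a m" using nm by (intro h_mono) simp
  then have le: "Suc (cnt \<beta> n) \<le> h \<beta> ?a m" using h_Suc[of \<beta> ?a n] by (simp add: cnt_def)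
  have "X ?a ^ Suc (cnt \<beta> n) dvd Q \<beta> m"
    using Q_split[of \<beta> m ?a] le by (metis dvd_mult2 le_imp_power_dvd)
  then show ?thesis unfolding D_def X_def by (intro L1[of _ "Suc (cnt \<beta> n)"]) auto
qed

lemma D_diag: "D \<beta> n n \<noteq> 0"
proof -
  let ?a = "\<beta> n"
  have "D \<beta> n n = fact (cnt \<beta> n) * poly (\<Prod>m\<in>{m. m<n \<and> \<beta> m \<noteq> ?a}. X (\<beta> m)) ?a"
    unfolding D_def using Q_split[of \<beta> n ?a] L2 by (simp add: cnt_def X_def)
  moreover have "poly (\<Prod>m\<in>{m. m<n \<and> \<beta> m \<noteq> ?a}. X (\<beta> m)) ?a \<noteq> 0"
    by (auto simp: poly_prod X_def)
  ultimately show ?thesis by simp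
qed

definition B :: "(nat \<Rightarrow> complex) \<Rightarrow> nat \<Rightarrow> real" where
  "B \<beta> n = (\<Sum>t\<le>n. pb ((pderiv^^t) (Q \<beta> n)) (real n))"

lemma B_bound: "t \<le> n \<Longrightarrow> norm x \<le> real n \<Longrightarrow> norm (poly ((pderiv^^t) (Q \<beta> n)) x) \<le> B \<beta> n"
  unfolding B_def
  apply (rule order_trans[OF pb_bound], assumption)
  apply (rule member_le_sum)
  by (auto intro: pb_nonneg)

lemma B_nonneg: "B \<beta> n \<ge> 0"
  unfolding B_def by (intro sum_nonneg pb_nonneg) simp

definition eps :: "(nat \<Rightarrow> complex) \<Rightarrow> nat \<Rightarrow> real" where
  "eps \<beta> n = (1/2)^n / (1 + B \<beta> n)"

lemma eps_pos: "eps \<beta> n > 0"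
  unfolding eps_def using B_nonneg[of \<beta> n] by simp

lemma eps_B: "eps \<beta> n * B \<beta> n \<le> (1/2)^n"
proof -
  have "B \<beta> n / (1 + B \<beta> n) \<le> 1" using B_nonneg[of \<beta> n] by simp
  then have "(1/2)^n * (B \<beta> n / (1 + B \<beta> n)) \<le> ((1/2)^n::real)"
    by (intro mult_left_le) auto
  then show ?thesis unfolding eps_def by simp
qed

fun cs :: "(nat \<Rightarrow> complex) \<Rightarrow> (complex \<Rightarrow> nat \<Rightarrow> complex set) \<Rightarrow> nat \<Rightarrow> complex list" where
  "cs \<beta> E 0 = []"
| "cs \<beta> E (Suc n) = cs \<beta> E n @ [SOME c. norm c \<le> eps \<beta> n \<and>
      (\<Sum>m<n. cs \<beta> E n ! m * D \<beta> m n) + c * D \<beta> n n \<in> E (\<beta> n) (cnt \<beta> n) - {0}]"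

lemma cs_length: "length (cs \<beta> E n) = n"
  by (induction n) auto

lemma cs_prefix: "m < n \<Longrightarrow> cs \<beta> E n ! m = cs \<beta> E (Suc m) ! m"
proof (induction n)
  case (Suc n)
  then show ?case
    by (cases "m = n") (simp_all add: nth_append cs_length del: cs.simps(2), simp_all add: nth_append cs_length)
qed simp



lemma main:
  fixes \<beta> :: "nat \<Rightarrow> complex" and E :: "complex \<Rightarrow> nat \<Rightarrow> complex set"
  assumes dense: "\<And>n s. closure (E (\<beta> n) s) = UNIV"
  shows "\<exists>f. f holomorphic_on UNIV \<and> (\<forall>n. (deriv^^(cnt \<beta> n)) f (\<beta> n) \<in> E (\<beta> n) (cnt \<beta> n) - {0})"
proof -
  define c where "c n = cs \<beta> E (Suc n) ! n" for n
  have c_prop: "norm (c n) \<le> eps \<beta> n \<and> (\<Sum>m<n. c m * D \<beta> m n) + c n * D \<beta> n n \<in> E (\<beta> n) (cnt \<beta> n) - {0}" for n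
  proof -
    define P where "P = (\<lambda>c'. norm c' \<le> eps \<beta> n \<and> (\<Sum>m<n. cs \<beta> E n ! m * D \<beta> m n) + c' * D \<beta> n n \<in> E (\<beta> n) (cnt \<beta> n) - {0})"
    have ex: "\<exists>c'. P c'"
      using dense_pick[OF dense D_diag eps_pos] unfolding P_def by (simp only:)
    have "cs \<beta> E (Suc n) = cs \<beta> E n @ [Eps P]"
      by (simp only: cs.simps P_def)
    then have "c n = Eps P"
      by (simp only: c_def nth_append cs_length) simp
    then have 1: "P (c n)"
      using someI_ex[OF ex] by (simp only:)
    have "(\<Sum>m<n. cs \<beta> E n ! m * D \<beta> m n) = (\<Sum>m<n. c m * D \<beta> m n)"
      unfolding c_def by (intro sum.cong refl) (metis cs_prefix lessThan_iff)
    with 1 show ?thesis unfolding P_def by (simp only:)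
  qed
  define F where "F s x = (\<Sum>n. c n * poly ((pderiv^^s) (Q \<beta> n)) x)" for s x
  have bnd: "norm (c n * poly ((pderiv^^s) (Q \<beta> n)) x) \<le> (1/2)^n"
    if "n \<ge> s" "norm x \<le> real n" for n s x
  proof -
    have "norm (c n * poly ((pderiv^^s) (Q \<beta> n)) x) = norm (c n) * norm (poly ((pderiv^^s) (Q \<beta> n)) x)"
      by (simp add: norm_mult)
    also have "\<dots> \<le> eps \<beta> n * B \<beta> n"
      using c_prop[of n] B_bound[OF that, of \<beta>] eps_pos[of \<beta> n] by (intro mult_mono) auto
    also have "\<dots> \<le> (1/2)^n" by (rule eps_B)
    finally show ?thesis .
  qed
  have ev: "eventually (\<lambda>n. \<forall>x\<in>ball 0 R. norm (c n * poly ((pderiv^^s) (Q \<beta> n)) x) \<le> (1/2)^n) sequentially" for s R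
  proof -
    have "eventually (\<lambda>n. n \<ge> max s (nat \<lceil>R\<rceil>)) sequentially" by (rule eventually_ge_at_top)
    then show ?thesis
    proof (rule eventually_mono, intro ballI)
      fix n x assume n: "max s (nat \<lceil>R\<rceil>) \<le> n" and x: "x \<in> ball (0::complex) R"
      have "norm x \<le> real n" using x n real_nat_ceiling_ge[of R] by (auto simp: dist_norm)
      then show "norm (c n * poly ((pderiv^^s) (Q \<beta> n)) x) \<le> (1/2)^n" using n bnd by simp
    qed
  qed
  have sg: "summable (\<lambda>n. (1/2::real)^n)" by (rule summable_geometric) simp
  have deriv: "(F s has_field_derivative F (Suc s) z) (at z)" for s z
  proof -
    define R where "R = norm z + 1"
    have h1: "convex (ball (0::complex) R)" by simp
    have h2: "((\<lambda>x. c n * poly ((pderiv^^s) (Q \<beta> n)) x) has_field_derivative c n * poly ((pderiv^^Suc s) (Q \<beta> n)) x) (at x within ball 0 R)" for n x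
    proof -
      have "((\<lambda>x. poly ((pderiv^^s) (Q \<beta> n)) x) has_field_derivative poly (pderiv ((pderiv^^s) (Q \<beta> n))) x) (at x)"
        by (rule poly_DERIV)
      then have "((\<lambda>x. c n * poly ((pderiv^^s) (Q \<beta> n)) x) has_field_derivative c n * poly ((pderiv^^Suc s) (Q \<beta> n)) x) (at x)"
        by (simp add: DERIV_cmult)
      then show ?thesis by (rule has_field_derivative_at_within)
    qed
    have h3: "uniformly_convergent_on (ball 0 R) (\<lambda>n x. \<Sum>i<n. c i * poly ((pderiv^^Suc s) (Q \<beta> i)) x)"
      by (rule Weierstrass_m_test'_ev[OF ev sg])
    have h4: "(0::complex) \<in> ball 0 R" unfolding R_def by (simp add: add_nonneg_pos)
    have h5: "summable (\<lambda>n. c n * poly ((pderiv^^s) (Q \<beta> n)) 0)"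
    proof (rule summable_comparison_test_ev[OF _ sg])
      show "eventually (\<lambda>n. norm (c n * poly ((pderiv^^s) (Q \<beta> n)) 0) \<le> (1/2)^n) sequentially"
        using ev[where s=s and R=1] by (rule eventually_mono) simp
    qed
    have h6: "z \<in> interior (ball 0 R)" by (simp add: R_def)
    from has_field_derivative_series'(2)[OF h1 h2 h3 h4 h5 h6] show ?thesis unfolding F_def .
  qed
  have dF: "deriv (F s) = F (Suc s)" for s
    by (rule ext, rule DERIV_imp_deriv, rule deriv)
  have dFs: "(deriv^^s) (F 0) = F s" for s
    by (induction s) (simp_all add: dF)
  have hol: "F 0 holomorphic_on UNIV"
    unfolding holomorphic_on_def field_differentiable_def using deriv
    by (meson has_field_derivative_at_within)
  have val: "F (cnt \<beta> n) (\<beta> n) \<in> E (\<beta> n) (cnt \<beta> n) - {0}" for n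
  proof -
    have "F (cnt \<beta> n) (\<beta> n) = (\<Sum>m. c m * D \<beta> m n)" by (simp add: F_def D_def)
    also have "\<dots> = (\<Sum>m\<in>{..<Suc n}. c m * D \<beta> m n)"
      by (rule suminf_finite) (auto simp: D_later)
    also have "\<dots> = (\<Sum>m<n. c m * D \<beta> m n) + c n * D \<beta> n n" by simp
    finally show ?thesis using c_prop[of n] by simp
  qed
  show ?thesis using hol val dFs by auto
qed



theorem theorem1:
  fixes A :: "complex set" and E :: "complex \<Rightarrow> nat \<Rightarrow> complex set"
  assumes "countable A"
    and "\<And>\<alpha> s. \<alpha> \<in> A \<Longrightarrow> closure (E \<alpha> s) = UNIV"
  shows "\<exists>f. transcendental_entire f \<and> (\<forall>\<alpha>\<in>A. \<forall>s. (deriv ^^ s) f \<alpha> \<in> E \<alpha> s)"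
proof (cases "A = {}")
  case True
  define \<beta> :: "nat \<Rightarrow> complex" where "\<beta> = (\<lambda>_. 0)"
  obtain f where f: "f holomorphic_on UNIV"
    "\<And>n. (deriv^^(cnt \<beta> n)) f (\<beta> n) \<in> (UNIV::complex set) - {0}"
    using main[where \<beta>=\<beta> and E="\<lambda>_ _. UNIV"] by auto
  have "cnt \<beta> n = n" for n by (simp add: cnt_def h_def \<beta>_def)
  then have "(deriv^^s) f 0 \<noteq> 0" for s using f(2)[of s] by (simp add: \<beta>_def)
  then have "transcendental_entire f" unfolding transcendental_entire_def using f(1) not_poly by blast
  then show ?thesis using True by blast
next
  case False
  define g where "g = from_nat_into A"
  define \<beta> where "\<beta> n = g (fst (prod_decode n))" for n
  have \<beta>A: "\<beta> n \<in> A" for n unfolding \<beta>_def g_def using False by (simp add: from_nat_into)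
  obtain f where f: "f holomorphic_on UNIV"
    "\<And>n. (deriv^^(cnt \<beta> n)) f (\<beta> n) \<in> E (\<beta> n) (cnt \<beta> n) - {0}"
    using main[where \<beta>=\<beta> and E=E] assms(2) \<beta>A by blast
  have key: "(deriv^^s) f \<alpha> \<in> E \<alpha> s - {0}" if "\<alpha> \<in> A" for \<alpha> s
  proof -
    obtain i where i: "g i = \<alpha>" using from_nat_into_surj[OF assms(1) \<open>\<alpha> \<in> A\<close>] g_def by auto
    have "range (\<lambda>j. prod_encode (i, j)) \<subseteq> {n. \<beta> n = \<alpha>}" using i by (auto simp: \<beta>_def)
    moreover have "infinite (range (\<lambda>j. prod_encode (i, j)))"
      by (rule range_inj_infinite) (simp add: inj_def prod_encode_eq)
    ultimately have "infinite {n. \<beta> n = \<alpha>}" using infinite_super by blast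
    then obtain n where n: "\<beta> n = \<alpha>" "h \<beta> \<alpha> n = s" using hit by blast
    then have "cnt \<beta> n = s" by (simp add: cnt_def)
    then show ?thesis using f(2)[of n] n by simp
  qed
  obtain \<alpha>0 where "\<alpha>0 \<in> A" using False by blast
  then have "(deriv^^s) f \<alpha>0 \<noteq> 0" for s using key by blast
  then have "transcendental_entire f" unfolding transcendental_entire_def using f(1) not_poly by blast
  then show ?thesis using key by blast
qed

end
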